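(* Let $n\ge 3$. For each positive integer $m$ and each $1\le i<j\le n$, we have $A_{i,j}^m\in B_n[2m]$, where $A_{i,j}=\sigma_{j-1}\sigma_{j-2}\cdots\sigma_{i+1}\sigma_i^2\sigma_{i+1}^{-1}\cdots\sigma_{j-2}^{-1}\sigma_{j-1}^{-1}$.
   Context: $B_n$ denotes the braid group on $n$ strands with standard Artin generators $\sigma_1,\dots,\sigma_{n-1}$ (the elements $A_{i,j}$ are the standard generators of the pure braid group $PB_n$). The reduced integral Burau representation $\rho_{-1}: B_n \to GL(n-1,\mathbb{Z})$ is defined on generators by $\rho_{-1}(\sigma_1)=\begin{pmatrix}1&0\\1&1\end{pmatrix}\oplus \mathrm{Id}_{n-3}$, $\rho_{-1}(\sigma_{n-1})=\mathrm{Id}_{n-3}\oplus\begin{pmatrix}1&-1\\0&1\end{pmatrix}$, and for $1<i<n-1$, $\rho_{-1}(\sigma_i)=\mathrm{Id}_{i-2}\oplus\begin{pmatrix}1&-1&0\\0&1&0\\0&1&1\end{pmatrix}\oplus \mathrm{Id}_{n-i-2}$, where $\oplus$ denotes block-diagonal sum. For a positive integer $\ell$, let $r_\ell: GL(n-1,\mathbb{Z})\to GL(n-1,\mathbb{Z}/\ell\mathbb{Z})$ be entrywise reduction mod $\ell$. The level $\ell$ congruence subgroup of the braid group is $B_n[\ell] := \ker(r_\ell\circ\rho_{-1})$. *)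

theory Defs
  imports "Jordan_Normal_Form.Matrix"
begin

text \<open>Reduced integral Burau representation rho_{-1} of the Artin generator sigma_i
  (1 \<le> i \<le> n-1) as an (n-1)x(n-1) integer matrix; rows/columns are 0-indexed,
  so the paper's entry (r+1,c+1) is our entry (r,c).\<close>
definition burau_gen :: "nat \<Rightarrow> nat \<Rightarrow> int mat" where
  "burau_gen n i = mat (n - 1) (n - 1) (\<lambda>(r, c).
     if i = 1 then
       (if r = c then 1 else if r = 1 \<and> c = 0 then 1 else 0)
     else if i = n - 1 then
       (if r = c then 1 else if r = n - 3 \<and> c = n - 2 then -1 else 0)
     else
       (if r = c then 1
        else if r = i - 2 \<and> c = i - 1 then -1
        else if r = i \<and> c = i - 1 then 1 else 0))"

definition burau_gen_inv :: "nat \<Rightarrow> nat \<Rightarrow> int mat" where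
  "burau_gen_inv n i = (SOME B. B \<in> carrier_mat (n - 1) (n - 1) \<and>
      burau_gen n i * B = 1\<^sub>m (n - 1) \<and> B * burau_gen n i = 1\<^sub>m (n - 1))"

text \<open>Braid words: a letter (i, True) is sigma_i, (i, False) is sigma_i^{-1}.\<close>
type_synonym braid_word = "(nat \<times> bool) list"

definition burau_letter :: "nat \<Rightarrow> nat \<times> bool \<Rightarrow> int mat" where
  "burau_letter n l = (if snd l then burau_gen n (fst l) else burau_gen_inv n (fst l))"

definition burau_word :: "nat \<Rightarrow> braid_word \<Rightarrow> int mat" where
  "burau_word n w = foldr (\<lambda>l M. burau_letter n l * M) w (1\<^sub>m (n - 1))"

text \<open>Membership of the braid represented by w in B_n[l] = ker (r_l \<circ> rho_{-1}).\<close>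
definition in_level :: "nat \<Rightarrow> nat \<Rightarrow> braid_word \<Rightarrow> bool" where
  "in_level n l w \<longleftrightarrow>
     map_mat (\<lambda>x. x mod int l) (burau_word n w) = map_mat (\<lambda>x. x mod int l) (1\<^sub>m (n - 1))"

definition A_word :: "nat \<Rightarrow> nat \<Rightarrow> braid_word" where
  "A_word i j = map (\<lambda>k. (k, True)) (rev [i+1..<j]) @ [(i, True), (i, True)]
                @ map (\<lambda>k. (k, False)) [i+1..<j]"

definition word_pow :: "braid_word \<Rightarrow> nat \<Rightarrow> braid_word" where
  "word_pow w m = concat (replicate m w)"

end

theory Submission
  imports Defs
begin

definition Nm :: "nat \<Rightarrow> nat \<Rightarrow> int mat" where
  "Nm n i = burau_gen n i - 1\<^sub>m (n - 1)"

lemma gen_carrier[simp]: "burau_gen n i \<in> carrier_mat (n - 1) (n - 1)"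
  by (simp add: burau_gen_def)

lemma gen_dims[simp]: "dim_row (burau_gen n i) = n - 1" "dim_col (burau_gen n i) = n - 1"
  by (simp_all add: burau_gen_def)

lemma Nm_dims[simp]: "dim_row (Nm n i) = n - 1" "dim_col (Nm n i) = n - 1"
  by (simp_all add: Nm_def)

lemma Nm_carrier[simp]: "Nm n i \<in> carrier_mat (n - 1) (n - 1)"
  by (rule carrier_matI) simp_all

lemma gen_eq: "burau_gen n i = 1\<^sub>m (n - 1) + 1 \<cdot>\<^sub>m Nm n i"
  by (rule eq_matI) (auto simp: Nm_def)

lemma Nm_entry_nz:
  assumes "n \<ge> 3" "1 \<le> i" "i \<le> n - 1" "r < n - 1" "c < n - 1" "Nm n i $$ (r, c) \<noteq> 0"
  shows "c = i - 1 \<and> r \<noteq> c"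
proof -
  have e: "Nm n i $$ (r, c) = burau_gen n i $$ (r, c) - (if r = c then 1 else 0)"
    using assms(4,5) by (simp add: Nm_def)
  have g: "burau_gen n i $$ (r, c) = (if i = 1 then
       (if r = c then 1 else if r = 1 \<and> c = 0 then 1 else 0)
     else if i = n - 1 then
       (if r = c then 1 else if r = n - 3 \<and> c = n - 2 then -1 else 0)
     else
       (if r = c then 1
        else if r = i - 2 \<and> c = i - 1 then -1
        else if r = i \<and> c = i - 1 then 1 else 0))"
    unfolding burau_gen_def by (rule trans[OF index_mat(1)[OF assms(4,5)]]) (simp only: prod.case)
  have rc: "r \<noteq> c"
  proof
    assume rc0: "r = c"
    then have "burau_gen n i $$ (r, c) = 1" using g by simp
    then show False using assms(6) e rc0 by simp
  qed
  show ?thesis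
  proof (cases "i = 1")
    case True
    have "burau_gen n i $$ (r, c) = (if r = 1 \<and> c = 0 then 1 else 0)"
      unfolding g by (simp only: if_P[OF True] if_not_P[OF rc])
    then have "c = 0" using assms(6) e rc by (auto split: if_split_asm)
    then show ?thesis using True rc by simp
  next
    case F1: False
    show ?thesis
    proof (cases "i = n - 1")
      case True
      have "burau_gen n i $$ (r, c) = (if r = n - 3 \<and> c = n - 2 then -1 else 0)"
        unfolding g by (simp only: if_not_P[OF F1] if_P[OF True] if_not_P[OF rc])
      then have "c = n - 2" using assms(6) e rc by (auto split: if_split_asm)
      then show ?thesis using True rc by simp
    next
      case False
      have "burau_gen n i $$ (r, c) = (if r = i - 2 \<and> c = i - 1 then -1
          else if r = i \<and> c = i - 1 then 1 else 0)"
        unfolding g by (simp only: if_not_P[OF F1] if_not_P[OF False] if_not_P[OF rc])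
      then have "c = i - 1" using assms(6) e rc by (auto split: if_split_asm)
      then show ?thesis using rc by simp
    qed
  qed
qed

lemma Nm_sq:
  assumes "n \<ge> 3" "1 \<le> i" "i \<le> n - 1"
  shows "Nm n i * Nm n i = 0\<^sub>m (n - 1) (n - 1)"
proof (rule eq_matI)
  fix r c assume rc: "r < dim_row (0\<^sub>m (n - 1) (n - 1) :: int mat)" "c < dim_col (0\<^sub>m (n - 1) (n - 1) :: int mat)"
  have "(Nm n i * Nm n i) $$ (r, c) = (\<Sum>k<n - 1. Nm n i $$ (r, k) * Nm n i $$ (k, c))"
    using rc by (simp add: scalar_prod_def times_mat_def atLeast0LessThan)
  also have "\<dots> = 0"
  proof (rule sum.neutral, intro ballI)
    fix k assume k: "k \<in> {..<n - 1}"
    show "Nm n i $$ (r, k) * Nm n i $$ (k, c) = 0"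
    proof (cases "Nm n i $$ (r, k) = 0")
      case False
      then have "k = i - 1" using Nm_entry_nz[OF assms] rc k by auto
      then show ?thesis using Nm_entry_nz[OF assms, of k c] rc k by fastforce
    qed simp
  qed
  finally show "(Nm n i * Nm n i) $$ (r, c) = 0\<^sub>m (n - 1) (n - 1) $$ (r, c)" using rc by simp
qed auto

lemma lin_mul:
  fixes N :: "int mat"
  assumes N: "N \<in> carrier_mat d d" and NN: "N * N = 0\<^sub>m d d"
  shows "(1\<^sub>m d + a \<cdot>\<^sub>m N) * (1\<^sub>m d + b \<cdot>\<^sub>m N) = 1\<^sub>m d + (a + b) \<cdot>\<^sub>m N"
proof -
  have c: "a \<cdot>\<^sub>m N \<in> carrier_mat d d" "b \<cdot>\<^sub>m N \<in> carrier_mat d d" "1\<^sub>m d \<in> carrier_mat d d"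
    using N by auto
  have cs: "1\<^sub>m d + b \<cdot>\<^sub>m N \<in> carrier_mat d d" using c by auto
  have "(1\<^sub>m d + a \<cdot>\<^sub>m N) * (1\<^sub>m d + b \<cdot>\<^sub>m N)
      = 1\<^sub>m d * (1\<^sub>m d + b \<cdot>\<^sub>m N) + (a \<cdot>\<^sub>m N) * (1\<^sub>m d + b \<cdot>\<^sub>m N)"
    using add_mult_distrib_mat[OF c(3) c(1) cs] .
  also have "(a \<cdot>\<^sub>m N) * (1\<^sub>m d + b \<cdot>\<^sub>m N) = (a \<cdot>\<^sub>m N) * 1\<^sub>m d + (a \<cdot>\<^sub>m N) * (b \<cdot>\<^sub>m N)"
    using mult_add_distrib_mat[OF c(1) c(3) c(2)] .
  also have "(a \<cdot>\<^sub>m N) * (b \<cdot>\<^sub>m N) = 0\<^sub>m d d"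
    using mult_smult_assoc_mat[OF N c(2)] mult_smult_distrib[OF N N] NN by simp
  also have "1\<^sub>m d * (1\<^sub>m d + b \<cdot>\<^sub>m N) = 1\<^sub>m d + b \<cdot>\<^sub>m N" by (rule left_mult_one_mat[OF cs])
  also have "(a \<cdot>\<^sub>m N) * 1\<^sub>m d = a \<cdot>\<^sub>m N" by (rule right_mult_one_mat[OF c(1)])
  finally show ?thesis using N by (intro eq_matI) (auto simp: algebra_simps)
qed

definition valid_w :: "nat \<Rightarrow> braid_word \<Rightarrow> bool" where
  "valid_w n w \<longleftrightarrow> (\<forall>l\<in>set w. 1 \<le> fst l \<and> fst l \<le> n - 1)"

lemma inv_props:
  assumes "n \<ge> 3" "1 \<le> i" "i \<le> n - 1"
  shows "burau_gen_inv n i \<in> carrier_mat (n - 1) (n - 1) \<and>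
      burau_gen n i * burau_gen_inv n i = 1\<^sub>m (n - 1) \<and> burau_gen_inv n i * burau_gen n i = 1\<^sub>m (n - 1)"
proof -
  let ?B = "1\<^sub>m (n - 1) + (-1) \<cdot>\<^sub>m Nm n i"
  have "?B \<in> carrier_mat (n - 1) (n - 1)" by (rule add_carrier_mat[OF smult_carrier_mat[OF Nm_carrier]])
  moreover have "burau_gen n i * ?B = 1\<^sub>m (n - 1)"
    unfolding gen_eq using lin_mul[OF Nm_carrier Nm_sq[OF assms], of 1 "-1"]
    by (simp, intro eq_matI, auto)
  moreover have "?B * burau_gen n i = 1\<^sub>m (n - 1)"
    unfolding gen_eq using lin_mul[OF Nm_carrier Nm_sq[OF assms], of "-1" 1]
    by (simp, intro eq_matI, auto)
  ultimately show ?thesis unfolding burau_gen_inv_def by (rule someI[where x = ?B, OF conjI[OF _ conjI]])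
qed

lemma letter_carrier:
  assumes "n \<ge> 3" "1 \<le> fst l" "fst l \<le> n - 1"
  shows "burau_letter n l \<in> carrier_mat (n - 1) (n - 1)"
proof (cases "snd l")
  case True then show ?thesis using gen_carrier[of n "fst l"] by (simp add: burau_letter_def)
next
  case False then show ?thesis using conjunct1[OF inv_props[OF assms]] by (simp add: burau_letter_def)
qed

lemma word_carrier:
  assumes "n \<ge> 3" "valid_w n w"
  shows "burau_word n w \<in> carrier_mat (n - 1) (n - 1)"
  using assms(2)
proof (induction w)
  case Nil then show ?case by (simp add: burau_word_def)
next
  case (Cons a w)
  then have "burau_word n w \<in> carrier_mat (n - 1) (n - 1)" by (simp add: valid_w_def)
  moreover have "burau_letter n a \<in> carrier_mat (n - 1) (n - 1)"
    using Cons.prems letter_carrier[OF assms(1)] by (simp add: valid_w_def)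
  ultimately show ?case by (simp add: burau_word_def)
qed

lemma word_append:
  assumes "n \<ge> 3" "valid_w n u" "valid_w n v"
  shows "burau_word n (u @ v) = burau_word n u * burau_word n v"
  using assms(2)
proof (induction u)
  case Nil then show ?case using word_carrier[OF assms(1,3)] by (simp add: burau_word_def)
next
  case (Cons a u)
  then have u: "valid_w n u" by (simp add: valid_w_def)
  have IH: "burau_word n (u @ v) = burau_word n u * burau_word n v" using Cons u by simp
  have la: "burau_letter n a \<in> carrier_mat (n - 1) (n - 1)"
    using Cons.prems letter_carrier[OF assms(1)] by (simp add: valid_w_def)
  have "burau_word n ((a # u) @ v) = burau_letter n a * burau_word n (u @ v)"
    by (simp add: burau_word_def)
  also have "\<dots> = burau_letter n a * (burau_word n u * burau_word n v)" using IH by simp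
  also have "\<dots> = (burau_letter n a * burau_word n u) * burau_word n v"
    using assoc_mult_mat[OF la word_carrier[OF assms(1) u] word_carrier[OF assms(1,3)]] by simp
  also have "burau_letter n a * burau_word n u = burau_word n (a # u)" by (simp add: burau_word_def)
  finally show ?case .
qed

lemma XY:
  assumes "n \<ge> 3" "\<forall>k\<in>set L. 1 \<le> k \<and> k \<le> n - 1"
  shows "burau_word n (map (\<lambda>k. (k, True)) (rev L)) * burau_word n (map (\<lambda>k. (k, False)) L) = 1\<^sub>m (n - 1)
       \<and> burau_word n (map (\<lambda>k. (k, False)) L) * burau_word n (map (\<lambda>k. (k, True)) (rev L)) = 1\<^sub>m (n - 1)"
  using assms(2)
proof (induction L)
  case Nil then show ?case by (simp add: burau_word_def)
next
  case (Cons a L)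
  let ?X = "burau_word n (map (\<lambda>k. (k, True)) (rev L))"
  let ?Y = "burau_word n (map (\<lambda>k. (k, False)) L)"
  have vX: "valid_w n (map (\<lambda>k. (k, True)) (rev L))" and vY: "valid_w n (map (\<lambda>k. (k, False)) L)"
    using Cons.prems by (auto simp: valid_w_def)
  have X: "?X \<in> carrier_mat (n - 1) (n - 1)" and Y: "?Y \<in> carrier_mat (n - 1) (n - 1)"
    using word_carrier[OF assms(1) vX] word_carrier[OF assms(1) vY] .
  have IH: "?X * ?Y = 1\<^sub>m (n - 1)" "?Y * ?X = 1\<^sub>m (n - 1)" using Cons by auto
  have a: "1 \<le> a" "a \<le> n - 1" using Cons.prems by auto
  note ip = inv_props[OF assms(1) a]
  define g where "g = burau_gen n a"
  define h where "h = burau_gen_inv n a"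
  have g: "g \<in> carrier_mat (n - 1) (n - 1)" and h: "h \<in> carrier_mat (n - 1) (n - 1)"
    and gh: "g * h = 1\<^sub>m (n - 1)" and hg: "h * g = 1\<^sub>m (n - 1)" using ip by (auto simp: g_def h_def)
  have wX: "burau_word n (map (\<lambda>k. (k, True)) (rev (a # L))) = ?X * g"
  proof -
    have "burau_word n (map (\<lambda>k. (k, True)) (rev (a # L))) = burau_word n (map (\<lambda>k. (k, True)) (rev L) @ [(a, True)])"
      by simp
    also have "\<dots> = ?X * burau_word n [(a, True)]"
      by (rule word_append[OF assms(1) vX]) (use a in \<open>simp add: valid_w_def\<close>)
    also have "burau_word n [(a, True)] = g" by (simp add: burau_word_def burau_letter_def g_def)
    finally show ?thesis .
  qed
  have wY: "burau_word n (map (\<lambda>k. (k, False)) (a # L)) = h * ?Y"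
    by (simp add: burau_word_def burau_letter_def h_def)
  have 1: "?X * g * (h * ?Y) = 1\<^sub>m (n - 1)"
  proof -
    have "?X * g * (h * ?Y) = ?X * (g * (h * ?Y))" by (rule assoc_mult_mat[OF X g mult_carrier_mat[OF h Y]])
    also have "g * (h * ?Y) = (g * h) * ?Y" by (rule assoc_mult_mat[OF g h Y, symmetric])
    finally show ?thesis by (simp only: gh left_mult_one_mat[OF Y] IH(1))
  qed
  have 2: "h * ?Y * (?X * g) = 1\<^sub>m (n - 1)"
  proof -
    have "h * ?Y * (?X * g) = h * (?Y * (?X * g))" by (rule assoc_mult_mat[OF h Y mult_carrier_mat[OF X g]])
    also have "?Y * (?X * g) = (?Y * ?X) * g" by (rule assoc_mult_mat[OF Y X g, symmetric])
    finally show ?thesis by (simp only: hg left_mult_one_mat[OF g] IH(2))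
  qed
  show ?case unfolding wX wY using 1 2 by (rule conjI)
qed

lemma valid_pow: "valid_w n w \<Longrightarrow> valid_w n (word_pow w m)"
  by (auto simp: valid_w_def word_pow_def)

theorem corollary2p5:
  fixes n m i j :: nat
  assumes "n \<ge> 3" and "m \<ge> 1" and "1 \<le> i" and "i < j" and "j \<le> n"
  shows "in_level n (2 * m) (word_pow (A_word i j) m)"
proof -
  let ?d = "n - 1"
  define L where "L = [i+1..<j]"
  have Lv: "\<forall>k\<in>set L. 1 \<le> k \<and> k \<le> n - 1" using assms by (auto simp: L_def)
  have iv: "1 \<le> i" "i \<le> n - 1" using assms by auto
  define X where "X = burau_word n (map (\<lambda>k. (k, True)) (rev L))"
  define Y where "Y = burau_word n (map (\<lambda>k. (k, False)) L)"
  define N where "N = Nm n i"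
  define g where "g = burau_gen n i"
  have vX: "valid_w n (map (\<lambda>k. (k, True)) (rev L))" and vY: "valid_w n (map (\<lambda>k. (k, False)) L)"
    using Lv by (auto simp: valid_w_def)
  have vg: "valid_w n [(i, True), (i, True)]" using iv by (simp add: valid_w_def)
  have X: "X \<in> carrier_mat ?d ?d" and Y: "Y \<in> carrier_mat ?d ?d"
    unfolding X_def Y_def using word_carrier[OF assms(1) vX] word_carrier[OF assms(1) vY] .
  have N: "N \<in> carrier_mat ?d ?d" unfolding N_def by (rule Nm_carrier)
  have g: "g \<in> carrier_mat ?d ?d" unfolding g_def by (rule gen_carrier)
  have NN: "N * N = 0\<^sub>m ?d ?d" unfolding N_def by (rule Nm_sq[OF assms(1) iv])
  have XY: "X * Y = 1\<^sub>m ?d" "Y * X = 1\<^sub>m ?d" using XY[OF assms(1) Lv] by (auto simp: X_def Y_def)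
  have vA: "valid_w n (A_word i j)"
    using vX vY vg unfolding A_word_def L_def[symmetric] by (auto simp: valid_w_def)
  have gg: "g * g = 1\<^sub>m ?d + 2 \<cdot>\<^sub>m N"
    using lin_mul[OF N NN, of 1 1] unfolding g_def N_def gen_eq by simp
  define M where "M = X * (N * Y)"
  have NY: "N * Y \<in> carrier_mat ?d ?d" using N Y by simp
  have M: "M \<in> carrier_mat ?d ?d" using X NY by (simp add: M_def)
  have wA: "burau_word n (A_word i j) = 1\<^sub>m ?d + 2 \<cdot>\<^sub>m M"
  proof -
    have "burau_word n (A_word i j) = X * burau_word n ([(i, True), (i, True)] @ map (\<lambda>k. (k, False)) L)"
      unfolding A_word_def L_def[symmetric] X_def
      by (rule word_append[OF assms(1) vX]) (use vg vY in \<open>auto simp: valid_w_def\<close>)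
    also have "burau_word n ([(i, True), (i, True)] @ map (\<lambda>k. (k, False)) L) = g * (g * Y)"
      by (simp add: burau_word_def burau_letter_def g_def Y_def)
    also have "g * (g * Y) = (g * g) * Y" by (rule assoc_mult_mat[OF g g Y, symmetric])
    also have "\<dots> = 1\<^sub>m ?d * Y + (2 \<cdot>\<^sub>m N) * Y"
      unfolding gg by (rule add_mult_distrib_mat[OF one_carrier_mat _ Y]) (use N in simp)
    also have "\<dots> = Y + 2 \<cdot>\<^sub>m (N * Y)" using Y N mult_smult_assoc_mat[OF N Y] by simp
    also have "X * (Y + 2 \<cdot>\<^sub>m (N * Y)) = X * Y + X * (2 \<cdot>\<^sub>m (N * Y))"
      by (rule mult_add_distrib_mat[OF X Y]) (use NY in simp)
    also have "X * (2 \<cdot>\<^sub>m (N * Y)) = 2 \<cdot>\<^sub>m M" unfolding M_def by (rule mult_smult_distrib[OF X NY])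
    finally show ?thesis using XY by simp
  qed
  have MM: "M * M = 0\<^sub>m ?d ?d"
  proof -
    have "M * M = X * (N * Y) * (X * (N * Y))" by (simp add: M_def)
    also have "\<dots> = X * ((N * Y) * (X * (N * Y)))" by (rule assoc_mult_mat[OF X NY mult_carrier_mat[OF X NY]])
    also have "(N * Y) * (X * (N * Y)) = N * (Y * (X * (N * Y)))" by (rule assoc_mult_mat[OF N Y mult_carrier_mat[OF X NY]])
    also have "Y * (X * (N * Y)) = (Y * X) * (N * Y)" by (rule assoc_mult_mat[OF Y X NY, symmetric])
    also have "\<dots> = N * Y" unfolding XY(2) by (rule left_mult_one_mat[OF NY])
    also have "N * (N * Y) = (N * N) * Y" by (rule assoc_mult_mat[OF N N Y, symmetric])
    also have "\<dots> = 0\<^sub>m ?d ?d" unfolding NN by (rule left_mult_zero_mat[OF Y])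
    also have "X * 0\<^sub>m ?d ?d = 0\<^sub>m ?d ?d" by (rule right_mult_zero_mat[OF X])
    finally show ?thesis .
  qed
  have pow: "burau_word n (word_pow (A_word i j) k) = 1\<^sub>m ?d + (2 * int k) \<cdot>\<^sub>m M" for k
  proof (induction k)
    case 0 show ?case using M by (intro eq_matI) (auto simp: word_pow_def burau_word_def)
  next
    case (Suc k)
    have "burau_word n (word_pow (A_word i j) (Suc k)) = burau_word n (A_word i j @ word_pow (A_word i j) k)"
      by (simp only: word_pow_def replicate_Suc concat.simps)
    also have "\<dots> = burau_word n (A_word i j) * burau_word n (word_pow (A_word i j) k)"
      by (rule word_append[OF assms(1) vA valid_pow[OF vA]])
    also have "\<dots> = 1\<^sub>m ?d + (2 + 2 * int k) \<cdot>\<^sub>m M" unfolding wA Suc by (rule lin_mul[OF M MM])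
    finally show ?case by simp
  qed
  show ?thesis unfolding in_level_def pow
  proof (rule eq_matI)
    fix r c assume rc: "r < dim_row (map_mat (\<lambda>x. x mod int (2 * m)) (1\<^sub>m ?d :: int mat))"
      "c < dim_col (map_mat (\<lambda>x. x mod int (2 * m)) (1\<^sub>m ?d :: int mat))"
    then have rc': "r < ?d" "c < ?d" by auto
    have e1: "map_mat (\<lambda>x. x mod int (2 * m)) (1\<^sub>m ?d + (2 * int m) \<cdot>\<^sub>m M) $$ (r, c) =
        (1\<^sub>m ?d $$ (r, c) + M $$ (r, c) * (2 * int m)) mod (2 * int m)"
      using rc' M by (simp add: algebra_simps)
    have e2: "map_mat (\<lambda>x. x mod int (2 * m)) (1\<^sub>m ?d) $$ (r, c) = 1\<^sub>m ?d $$ (r, c) mod (2 * int m)"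
      using rc' by simp
    show "map_mat (\<lambda>x. x mod int (2 * m)) (1\<^sub>m ?d + (2 * int m) \<cdot>\<^sub>m M) $$ (r, c) =
          map_mat (\<lambda>x. x mod int (2 * m)) (1\<^sub>m ?d) $$ (r, c)"
      unfolding e1 e2 by (rule mod_mult_self1)
  qed (use M in auto)
qed

end
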